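(* Let $L$ be a real-valued Lévy process which is a special semimartingale with characteristic triplet $(b,0,F)$ with respect to $h(x)=x$, with $F(dx)=f(x)dx$, and let $0<Y<2$. (a) If $f_s(x)=O(|x|^{-(1+Y)})$ as $x\to0$, then there is $C\ge0$ with $0\le\Re(A^f(u))=A^{f_s}(u)\le C(1+|u|^Y)$ for all $u\in\mathds R$. (b) If $f_s(x)=\frac{C}{|x|^{1+Y}}+g(x)$ with $C>0$ and $g(x)=O(|x|^{-(1+Y-\delta)})$ as $x\to0$ for some $\delta>0$, then there exist $C_1>0$, $C_2\ge0$ and $Y'\in(0,Y)$ with $\Re(A^f(u))=A^{f_s}(u)\ge C_1|u|^Y-C_2(1+|u|^{Y'})$ for all $u\in\mathds R$. (c) If $f_{as}(x)=O(|x|^{-(1+Y)})$ as $x\to0$ and $Y\ne1$, then there are $C,C_1\ge0$ with $|\Im(A^f(u))|=|A^{f_{as}}(u)|\le C(1+|u|+|u|^Y)\le C_1(1+|u|^{\max(1,Y)})$ for all $u\in\mathds R$. (d) If $Y\in(0,1)$, $f_{as}(x)=O(|x|^{-(1+Y)})$ as $x\to0$, $\int|x|f(x)dx<\infty$, and $b=\int xF(dx)$, then there is $C\ge0$ with $|\Im(A(u))|\le C(1+|u|^Y)$ for all $u\in\mathds R$.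
   Context: $f_s(x)=\frac12(f(x)+f(-x))$ and $f_{as}(x)=\frac12(f(x)-f(-x))$. Define $A^{f_s}(u)=-\int(e^{-iux}-1+iux)f_s(x)dx=-\int(\cos(ux)-1)f_s(x)dx$, $A^{f_{as}}(u)=-\int(e^{-iux}-1+iux)f_{as}(x)dx=i\int(\sin(ux)-ux)f_{as}(x)dx$, and $A^f=A^{f_s}+A^{f_{as}}=-\int(e^{-iux}-1+iux)f(x)dx$. The symbol of $L$ is $A(u)=iub+A^f(u)$. $h(x)=O(k(x))$ as $x\to0$ means $|h|/|k|$ is bounded on some punctured neighbourhood of $0$. *)

theory Defs
  imports "HOL-Analysis.Analysis" "HOL-Library.Landau_Symbols"
begin

definition f_s :: "(real \<Rightarrow> real) \<Rightarrow> real \<Rightarrow> real" where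
  "f_s f x = (f x + f (- x)) / 2"

definition f_as :: "(real \<Rightarrow> real) \<Rightarrow> real \<Rightarrow> real" where
  "f_as f x = (f x - f (- x)) / 2"

definition A_dens :: "(real \<Rightarrow> real) \<Rightarrow> real \<Rightarrow> complex" where
  "A_dens f u = - (LINT x|lborel. (exp (- \<i> * complex_of_real (u * x)) - 1
                     + \<i> * complex_of_real (u * x)) * complex_of_real (f x))"

text \<open>Symbol of the Levy process with triplet (b,0,F(dx)=f(x)dx) w.r.t. h(x)=x.\<close>
definition levy_symbol :: "real \<Rightarrow> (real \<Rightarrow> real) \<Rightarrow> real \<Rightarrow> complex" where
  "levy_symbol b f u = \<i> * complex_of_real (u * b) + A_dens f u"

text \<open>f is the density of a Levy measure F(dx)=f(x)dx for which the Levy process is a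
  special semimartingale: F integrates min(x^2,|x|).\<close>
definition special_levy_density :: "(real \<Rightarrow> real) \<Rightarrow> bool" where
  "special_levy_density f \<longleftrightarrow> f \<in> borel_measurable borel \<and> (\<forall>x. 0 \<le> f x)
     \<and> integrable lborel (\<lambda>x. min (x\<^sup>2) \<bar>x\<bar> * f x)"

end

theory Submission
  imports Defs
begin


lemma cos4: fixes x :: real shows "\<bar>cos x - (1 - x\<^sup>2/2)\<bar> \<le> x^4/24"
proof -
  obtain t where h: "cos x = (\<Sum>m<4. cos_coeff m * x ^ m) + (cos(t + 1/2 * real 4 * pi) / fact 4) * x ^ 4"
    using Maclaurin_cos_expansion by blast
  have s: "(\<Sum>m<4. cos_coeff m * x ^ m) = 1 - x\<^sup>2/2"
    by (simp add: cos_coeff_def lessThan_nat_numeral power2_eq_square)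
  have c: "cos(t + 1/2 * real 4 * pi) = cos t"
  proof -
    have "1/2 * real 4 * pi = 2*pi" by simp
    thus ?thesis by (simp add: cos_periodic)
  qed
  have f: "fact 4 = (24::real)" by (simp add: fact_numeral)
  have "cos x = 1 - x\<^sup>2/2 + cos t / 24 * x ^ 4" using h unfolding s c f .
  hence e: "cos x - (1 - x\<^sup>2/2) = cos t / 24 * x^4" by linarith
  have "\<bar>cos x - (1 - x\<^sup>2/2)\<bar> = \<bar>cos t / 24 * x^4\<bar>" by (simp only: e)
  also have "\<dots> = \<bar>cos t\<bar> * (x^4/24)" by (simp add: abs_mult)
  also have "\<dots> \<le> x^4/24" by (rule mult_left_le_one_le) auto
  finally show ?thesis .
qed

lemma cos2: fixes x :: real shows "1 - cos x \<le> x\<^sup>2/2"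
proof -
  obtain t where h: "cos x = (\<Sum>m<2. cos_coeff m * x ^ m) + (cos(t + 1/2 * real 2 * pi) / fact 2) * x ^ 2"
    using Maclaurin_cos_expansion by blast
  have s: "(\<Sum>m<2. cos_coeff m * x ^ m) = 1"
    by (simp add: cos_coeff_def eval_nat_numeral)
  have c: "cos(t + 1/2 * real 2 * pi) = - cos t"
  proof -
    have "1/2 * real 2 * pi = pi" by simp
    thus ?thesis by (simp add: cos_add)
  qed
  have f: "fact 2 = (2::real)" by (simp add: fact_numeral)
  have "cos x = 1 + (- cos t / 2) * x\<^sup>2" using h unfolding s c f .
  moreover have "cos t * x\<^sup>2 \<le> 1 * x\<^sup>2" by (rule mult_right_mono) auto
  ultimately show ?thesis by simp
qed
lemma sin3: fixes x :: real shows "\<bar>sin x - x\<bar> \<le> \<bar>x\<bar>^3/6"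
proof -
  have s: "(\<Sum>m<3. sin_coeff m * x ^ m) = x"
    by (simp add: lessThan_nat_numeral sin_coeff_def)
  have f: "inverse (fact 3) = (1/6::real)" by (simp add: fact_numeral)
  show ?thesis using Maclaurin_sin_bound[of x 3] unfolding s f by simp
qed
lemma cos_low: fixes x :: real assumes "\<bar>x\<bar> \<le> 1" shows "x\<^sup>2/4 \<le> 1 - cos x"
proof -
  have "x^4 \<le> x\<^sup>2"
  proof -
    have "\<bar>x\<bar>*\<bar>x\<bar> \<le> 1*1" by (rule mult_mono) (use assms in auto)
    hence "x\<^sup>2 \<le> 1" by (simp add: power2_eq_square)
    hence "x\<^sup>2 * x\<^sup>2 \<le> 1 * x\<^sup>2" by (intro mult_right_mono) auto
    thus ?thesis by (simp add: power2_eq_square power4_eq_xxxx mult.assoc)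
  qed
  thus ?thesis using cos4[of x] by linarith
qed

lemma sin_sq: fixes x :: real shows "\<bar>sin x - x\<bar> \<le> 2 * x\<^sup>2"
proof (cases "\<bar>x\<bar> \<le> 1")
  case True
  have "\<bar>x\<bar>^3 \<le> \<bar>x\<bar>^2" using True by (intro power_decreasing) auto
  hence "\<bar>x\<bar>^3 \<le> x\<^sup>2" by simp
  moreover have "x\<^sup>2 \<ge> 0" by simp
  moreover have "\<bar>sin x - x\<bar> \<le> \<bar>x\<bar>^3/6" by (rule sin3)
  ultimately show ?thesis by linarith
next
  case False
  have "\<bar>sin x - x\<bar> \<le> 2 * \<bar>x\<bar>" using abs_sin_x_le_abs_x[of x] by linarith
  also have "\<dots> \<le> 2 * x\<^sup>2"
  proof -
    have "\<bar>x\<bar> * 1 \<le> \<bar>x\<bar> * \<bar>x\<bar>" by (rule mult_left_mono) (use False in auto)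
    thus ?thesis by (simp add: power2_eq_square)
  qed
  finally show ?thesis .
qed

lemma sin_lin: fixes x :: real shows "\<bar>sin x - x\<bar> \<le> 2 * \<bar>x\<bar>"
  using abs_sin_x_le_abs_x[of x] by linarith

lemma cos_nonneg': fixes x :: real shows "0 \<le> 1 - cos x" by simp
lemma cos_le2: fixes x :: real shows "1 - cos x \<le> 2" by (smt (verit) cos_ge_minus_one)



lemma hi_lborel:
  fixes f :: "real \<Rightarrow> real"
  assumes fm: "f \<in> borel_measurable borel" and nn: "\<And>x. 0 \<le> f x" and hi: "(f has_integral I) UNIV"
  shows "integrable lborel f \<and> integral\<^sup>L lborel f = I"
proof -
  have I0: "0 \<le> I" using has_integral_nonneg[OF hi] nn by auto
  have "integral\<^sup>N lborel f = ennreal I"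
    using nn_integral_has_integral_lborel[OF fm _ hi] nn by auto
  hence "has_bochner_integral lborel f I"
    using fm nn I0 by (intro has_bochner_integral_nn_integral) auto
  thus ?thesis by (simp add: has_bochner_integral_iff)
qed

lemma pow01:
  fixes p :: real assumes p: "p > -1"
  shows "integrable lborel (\<lambda>y. indicator {0..1} y * y powr p)
     \<and> integral\<^sup>L lborel (\<lambda>y. indicator {0..1} y * y powr p) = 1/(p+1)"
proof (rule hi_lborel)
  show "(\<lambda>y. indicator {0..1} y * y powr p) \<in> borel_measurable borel" by measurable
  show "0 \<le> indicator {0..1} y * y powr p" for y :: real by simp
  have "((\<lambda>x. x powr p) has_integral (1 powr (p+1) / (p+1))) {0..1}"
    using has_integral_powr_from_0[OF p, of 1] by simp
  hence "((\<lambda>x. if x \<in> {0..1} then x powr p else 0) has_integral (1/(p+1))) UNIV"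
    unfolding has_integral_restrict_UNIV by simp
  thus "((\<lambda>y. indicator {0..1} y * y powr p) has_integral (1/(p+1))) UNIV"
    by (rule has_integral_eq[rotated]) (simp add: indicator_def)
qed

lemma pow1inf:
  fixes q :: real assumes q: "q < -1"
  shows "integrable lborel (\<lambda>y. indicator {1..} y * y powr q)"
proof -
  have "integrable lborel (\<lambda>y. indicator {1..} y * y powr q)
     \<and> integral\<^sup>L lborel (\<lambda>y. indicator {1..} y * y powr q) = -(1 powr (q+1)) / (q+1)"
  proof (rule hi_lborel)
    show "(\<lambda>y. indicator {1..} y * y powr q) \<in> borel_measurable borel" by measurable
    show "0 \<le> indicator {1..} y * y powr q" for y :: real by simp
    have "((\<lambda>x. x powr q) has_integral (-(1 powr (q+1)) / (q+1))) {1..}"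
      using has_integral_powr_to_inf[OF q, of 1] by simp
    hence "((\<lambda>x. if x \<in> {1..} then x powr q else 0) has_integral (-(1 powr (q+1)) / (q+1))) UNIV"
      unfolding has_integral_restrict_UNIV by simp
    thus "((\<lambda>y. indicator {1..} y * y powr q) has_integral (-(1 powr (q+1)) / (q+1))) UNIV"
      by (rule has_integral_eq[rotated]) (simp add: indicator_def)
  qed
  thus ?thesis by simp
qed

lemma sym_int:
  fixes g :: "real \<Rightarrow> real"
  assumes "integrable lborel g"
  shows "integrable lborel (\<lambda>y. g y + g (-y)) \<and> integral\<^sup>L lborel (\<lambda>y. g y + g (-y)) = 2 * integral\<^sup>L lborel g"
proof -
  have i2: "integrable lborel (\<lambda>y. g (-y))"
    using lborel_integrable_real_affine[OF assms, of "-1" 0] by simp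
  have "integral\<^sup>L lborel g = integral\<^sup>L lborel (\<lambda>y. g (-y))"
    using lborel_integral_real_affine[of "-1" g 0] by simp
  thus ?thesis using assms i2 by simp
qed

lemma P1:
  fixes p :: real assumes p: "p > -1"
  shows "integrable lborel (\<lambda>y. indicator {-1..1} y * \<bar>y\<bar> powr p)
     \<and> integral\<^sup>L lborel (\<lambda>y. indicator {-1..1} y * \<bar>y\<bar> powr p) = 2/(p+1)"
proof -
  let ?g = "\<lambda>y::real. indicator {0..1} y * y powr p"
  have e: "(\<lambda>y. indicator {-1..1} y * \<bar>y\<bar> powr p) = (\<lambda>y. ?g y + ?g (-y))"
  proof
    fix y :: real
    show "indicator {-1..1} y * \<bar>y\<bar> powr p = ?g y + ?g (-y)"
      by (cases "y > 0"; cases "y < 0") (auto simp: indicator_def)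
  qed
  show ?thesis unfolding e using sym_int[of ?g] pow01[OF p] by simp
qed

lemma P2:
  fixes q :: real assumes q: "q < -1"
  shows "integrable lborel (\<lambda>y. indicator {y. 1 \<le> \<bar>y\<bar>} y * \<bar>y\<bar> powr q)"
proof -
  let ?g = "\<lambda>y::real. indicator {1..} y * y powr q"
  have e: "(\<lambda>y. indicator {y. 1 \<le> \<bar>y\<bar>} y * \<bar>y\<bar> powr q) = (\<lambda>y. ?g y + ?g (-y))"
  proof
    fix y :: real
    show "indicator {y. 1 \<le> \<bar>y\<bar>} y * \<bar>y\<bar> powr q = ?g y + ?g (-y)"
      by (cases "y > 0"; cases "y < 0") (auto simp: indicator_def)
  qed
  show ?thesis unfolding e using sym_int[of ?g] pow1inf[OF q] by simp
qed

definition PP :: "real \<Rightarrow> real \<Rightarrow> real \<Rightarrow> real" where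
  "PP p q y = indicator {-1..1} y * \<bar>y\<bar> powr p + indicator {y. 1 \<le> \<bar>y\<bar>} y * \<bar>y\<bar> powr q"

lemma PP_int: assumes "p > -1" "q < -1" shows "integrable lborel (PP p q)"
proof -
  have "integrable lborel (\<lambda>y. indicator {-1..1} y * \<bar>y\<bar> powr p)" using P1[OF assms(1)] by simp
  moreover have "integrable lborel (\<lambda>y. indicator {y. 1 \<le> \<bar>y\<bar>} y * \<bar>y\<bar> powr q)" using P2[OF assms(2)] .
  ultimately show ?thesis unfolding PP_def by (rule Bochner_Integration.integrable_add)
qed

lemma PP_nonneg: "0 \<le> PP p q y" unfolding PP_def by simp

lemma PP_0: "PP p q 0 = 0" unfolding PP_def by simp

lemma PP_meas[measurable]: "PP p q \<in> borel_measurable borel" unfolding PP_def by measurable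



lemma scale_int:
  fixes g :: "real \<Rightarrow> real"
  assumes "integrable lborel g" "u \<noteq> 0"
  shows "integrable lborel (\<lambda>x. g (u*x)) \<and> integral\<^sup>L lborel (\<lambda>x. g (u*x)) = integral\<^sup>L lborel g / \<bar>u\<bar>"
proof -
  have "integrable lborel (\<lambda>x. g (u*x))" using lborel_integrable_real_affine[OF assms(1), of u 0] assms(2) by simp
  moreover have "integral\<^sup>L lborel g = \<bar>u\<bar> * integral\<^sup>L lborel (\<lambda>x. g (u*x))"
    using lborel_integral_real_affine[OF assms(2), of g 0] by simp
  ultimately show ?thesis using assms(2) by simp
qed

lemma powr_scale:
  fixes x u q :: real
  assumes "x \<noteq> 0" "u \<noteq> 0"
  shows "\<bar>x\<bar> powr q = \<bar>u\<bar> powr (-q) * \<bar>u*x\<bar> powr q"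
proof -
  have "\<bar>u*x\<bar> powr q = \<bar>u\<bar> powr q * \<bar>x\<bar> powr q" by (simp add: abs_mult powr_mult)
  moreover have "\<bar>u\<bar> powr (-q) * \<bar>u\<bar> powr q = 1"
    using assms by (simp add: powr_minus)
  ultimately show ?thesis by (metis mult.assoc mult_1)
qed

lemma pw1: fixes y r :: real assumes "y \<noteq> 0" shows "\<bar>y\<bar> * \<bar>y\<bar> powr r = \<bar>y\<bar> powr (r+1)"
  using assms by (simp add: powr_add)

lemma pw2: fixes y r :: real assumes "y \<noteq> 0" shows "y\<^sup>2 * \<bar>y\<bar> powr r = \<bar>y\<bar> powr (r+2)"
proof -
  have "\<bar>y\<bar> powr (r+2) = \<bar>y\<bar> powr (r+1) * \<bar>y\<bar>" using assms by (simp add: powr_add power2_eq_square)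
  also have "\<dots> = \<bar>y\<bar> * \<bar>y\<bar> powr r * \<bar>y\<bar>" using pw1[OF assms] by simp
  also have "\<dots> = y\<^sup>2 * \<bar>y\<bar> powr r" by (simp add: power2_eq_square)
  finally show ?thesis by simp
qed




lemma PP_ge1: fixes y :: real shows "\<bar>y\<bar> \<le> 1 \<Longrightarrow> \<bar>y\<bar> powr p \<le> PP p q y"
  unfolding PP_def by (auto simp: indicator_def abs_le_iff)

lemma PP_ge2: fixes y :: real shows "\<bar>y\<bar> \<ge> 1 \<Longrightarrow> \<bar>y\<bar> powr q \<le> PP p q y"
  unfolding PP_def by (auto simp: indicator_def abs_le_iff)

lemma KA:
  fixes y a :: real assumes a: "0 < a"
  shows "(1 - cos y) * \<bar>y\<bar> powr (-(1+a)) \<le> 2 * PP (1-a) (-(1+a)) y"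
proof (cases "y = 0")
  case True thus ?thesis by (simp add: PP_0)
next
  case y: False
  show ?thesis
  proof (cases "\<bar>y\<bar> \<le> 1")
    case True
    have "(1 - cos y) * \<bar>y\<bar> powr (-(1+a)) \<le> y\<^sup>2/2 * \<bar>y\<bar> powr (-(1+a))"
      by (rule mult_right_mono[OF cos2]) simp
    also have "\<dots> = \<bar>y\<bar> powr (1-a) / 2" using pw2[OF y, of "-(1+a)"] by simp
    also have "\<dots> \<le> 2 * PP (1-a) (-(1+a)) y"
      using PP_ge1[OF True, of "1-a" "-(1+a)"] powr_ge_zero[of "\<bar>y\<bar>" "1-a"] by linarith
    finally show ?thesis .
  next
    case False
    have "(1 - cos y) * \<bar>y\<bar> powr (-(1+a)) \<le> 2 * \<bar>y\<bar> powr (-(1+a))"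
      by (rule mult_right_mono[OF cos_le2]) simp
    also have "\<dots> \<le> 2 * PP (1-a) (-(1+a)) y" using PP_ge2[of y] False by simp
    finally show ?thesis .
  qed
qed

lemma KL:
  fixes y Y :: real
  shows "indicator {-1..1} y * \<bar>y\<bar> powr (1-Y) / 4 \<le> (1 - cos y) * \<bar>y\<bar> powr (-(1+Y))"
proof (cases "y = 0 \<or> \<bar>y\<bar> > 1")
  case True thus ?thesis by (auto simp: indicator_def)
next
  case False
  hence y: "y \<noteq> 0" "\<bar>y\<bar> \<le> 1" by auto
  have "indicator {-1..1} y * \<bar>y\<bar> powr (1-Y) / 4 = y\<^sup>2/4 * \<bar>y\<bar> powr (-(1+Y))"
    using pw2[OF y(1), of "-(1+Y)"] y(2) by (simp add: indicator_def abs_le_iff)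
  also have "\<dots> \<le> (1 - cos y) * \<bar>y\<bar> powr (-(1+Y))"
    by (rule mult_right_mono[OF cos_low[OF y(2)]]) simp
  finally show ?thesis .
qed

lemma KC:
  fixes y Y :: real
  shows "\<bar>sin y - y\<bar> * \<bar>y\<bar> powr (-(1+Y)) \<le> 2 * PP (1-Y) (-Y) y"
proof (cases "y = 0")
  case True thus ?thesis by (simp add: PP_0)
next
  case y: False
  show ?thesis
  proof (cases "\<bar>y\<bar> \<le> 1")
    case True
    have "\<bar>sin y - y\<bar> * \<bar>y\<bar> powr (-(1+Y)) \<le> (2*y\<^sup>2) * \<bar>y\<bar> powr (-(1+Y))"
      by (rule mult_right_mono[OF sin_sq]) simp
    also have "\<dots> = 2 * \<bar>y\<bar> powr (1-Y)" using pw2[OF y, of "-(1+Y)"] by simp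
    also have "\<dots> \<le> 2 * PP (1-Y) (-Y) y" using PP_ge1[OF True] by simp
    finally show ?thesis .
  next
    case False
    have "\<bar>sin y - y\<bar> * \<bar>y\<bar> powr (-(1+Y)) \<le> (2*\<bar>y\<bar>) * \<bar>y\<bar> powr (-(1+Y))"
      by (rule mult_right_mono[OF sin_lin]) simp
    also have "\<dots> = 2 * \<bar>y\<bar> powr (-Y)" using pw1[OF y, of "-(1+Y)"] by simp
    also have "\<dots> \<le> 2 * PP (1-Y) (-Y) y" using PP_ge2[of y] False by simp
    finally show ?thesis .
  qed
qed

lemma KD:
  fixes y Y :: real
  shows "\<bar>sin y\<bar> * \<bar>y\<bar> powr (-(1+Y)) \<le> PP (-Y) (-(1+Y)) y"
proof (cases "y = 0")
  case True thus ?thesis by (simp add: PP_0)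
next
  case y: False
  show ?thesis
  proof (cases "\<bar>y\<bar> \<le> 1")
    case True
    have "\<bar>sin y\<bar> * \<bar>y\<bar> powr (-(1+Y)) \<le> \<bar>y\<bar> * \<bar>y\<bar> powr (-(1+Y))"
      by (rule mult_right_mono[OF abs_sin_x_le_abs_x]) simp
    also have "\<dots> = \<bar>y\<bar> powr (-Y)" using pw1[OF y, of "-(1+Y)"] by simp
    also have "\<dots> \<le> PP (-Y) (-(1+Y)) y" using PP_ge1[OF True] by simp
    finally show ?thesis .
  next
    case False
    have "\<bar>sin y\<bar> * \<bar>y\<bar> powr (-(1+Y)) \<le> 1 * \<bar>y\<bar> powr (-(1+Y))"
      by (rule mult_right_mono) simp_all
    also have "\<dots> \<le> PP (-Y) (-(1+Y)) y" using PP_ge2[of y] False by simp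
    finally show ?thesis .
  qed
qed

lemma mle1: "\<bar>x::real\<bar> \<le> 1 \<Longrightarrow> min (x\<^sup>2) \<bar>x\<bar> = x\<^sup>2"
proof -
  assume h: "\<bar>x\<bar> \<le> 1"
  have "\<bar>x\<bar> * \<bar>x\<bar> \<le> 1 * \<bar>x\<bar>" by (rule mult_right_mono) (use h in auto)
  thus ?thesis by (simp add: power2_eq_square min_def)
qed

lemma mge1: "\<bar>x::real\<bar> \<ge> 1 \<Longrightarrow> min (x\<^sup>2) \<bar>x\<bar> = \<bar>x\<bar>"
proof -
  assume h: "\<bar>x\<bar> \<ge> 1"
  have "1 * \<bar>x\<bar> \<le> \<bar>x\<bar> * \<bar>x\<bar>" by (rule mult_right_mono) (use h in auto)
  thus ?thesis by (simp add: power2_eq_square min_def)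
qed

lemma cos_m: fixes u x :: real shows "1 - cos (u*x) \<le> (2*u\<^sup>2 + 2*\<bar>u\<bar> + 2) * min (x\<^sup>2) \<bar>x\<bar>"
proof (cases "\<bar>x\<bar> \<le> 1")
  case True
  have "1 - cos (u*x) \<le> (u*x)\<^sup>2/2" by (rule cos2)
  also have "\<dots> \<le> (2*u\<^sup>2 + 2*\<bar>u\<bar> + 2) * x\<^sup>2"
  proof -
    have h: "u\<^sup>2 \<le> 2*u\<^sup>2 + 2*\<bar>u\<bar> + 2" using zero_le_power2[of u] abs_ge_zero[of u] by linarith
    have "u\<^sup>2 * x\<^sup>2 \<le> (2*u\<^sup>2 + 2*\<bar>u\<bar> + 2) * x\<^sup>2" by (rule mult_right_mono[OF h]) simp
    moreover have "0 \<le> u\<^sup>2 * x\<^sup>2" by simp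
    moreover have "(u*x)\<^sup>2/2 = u\<^sup>2 * x\<^sup>2/2" by (simp add: power_mult_distrib)
    ultimately show ?thesis by linarith
  qed
  finally show ?thesis using mle1[OF True] by simp
next
  case False
  have "1 - cos (u*x) \<le> 2" by (rule cos_le2)
  also have "\<dots> \<le> (2*u\<^sup>2 + 2*\<bar>u\<bar> + 2) * \<bar>x\<bar>"
  proof -
    have "2 * 1 \<le> (2*u\<^sup>2 + 2*\<bar>u\<bar> + 2) * \<bar>x\<bar>" by (rule mult_mono) (use False in auto)
    thus ?thesis by simp
  qed
  finally show ?thesis using mge1[of x] False by simp
qed

lemma sin_m: fixes u x :: real shows "\<bar>sin (u*x) - u*x\<bar> \<le> (2*u\<^sup>2 + 2*\<bar>u\<bar> + 2) * min (x\<^sup>2) \<bar>x\<bar>"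
proof (cases "\<bar>x\<bar> \<le> 1")
  case True
  have "\<bar>sin (u*x) - u*x\<bar> \<le> 2*(u*x)\<^sup>2" by (rule sin_sq)
  also have "\<dots> \<le> (2*u\<^sup>2 + 2*\<bar>u\<bar> + 2) * x\<^sup>2"
  proof -
    have h: "2*u\<^sup>2 \<le> 2*u\<^sup>2 + 2*\<bar>u\<bar> + 2" using abs_ge_zero[of u] by linarith
    have "(2*u\<^sup>2) * x\<^sup>2 \<le> (2*u\<^sup>2 + 2*\<bar>u\<bar> + 2) * x\<^sup>2" by (rule mult_right_mono[OF h]) simp
    thus ?thesis by (simp add: power_mult_distrib)
  qed
  finally show ?thesis using mle1[OF True] by simp
next
  case False
  have "\<bar>sin (u*x) - u*x\<bar> \<le> 2*\<bar>u*x\<bar>" by (rule sin_lin)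
  also have "\<dots> \<le> (2*u\<^sup>2 + 2*\<bar>u\<bar> + 2) * \<bar>x\<bar>"
  proof -
    have h: "2*\<bar>u\<bar> \<le> 2*u\<^sup>2 + 2*\<bar>u\<bar> + 2" using zero_le_power2[of u] by linarith
    have "(2*\<bar>u\<bar>) * \<bar>x\<bar> \<le> (2*u\<^sup>2 + 2*\<bar>u\<bar> + 2) * \<bar>x\<bar>" by (rule mult_right_mono[OF h]) simp
    thus ?thesis by (simp add: abs_mult)
  qed
  finally show ?thesis using mge1[of x] False by simp
qed

lemma int_kern:
  fixes g :: "real \<Rightarrow> real"
  assumes gm[measurable]: "g \<in> borel_measurable borel" and gi: "integrable lborel (\<lambda>x. min (x\<^sup>2) \<bar>x\<bar> * g x)"
  shows "integrable lborel (\<lambda>x. (1 - cos (u*x)) * g x)" "integrable lborel (\<lambda>x. (sin (u*x) - u*x) * g x)"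
proof -
  let ?C = "2*u\<^sup>2 + 2*\<bar>u\<bar> + 2"
  have C0: "0 \<le> ?C" by (simp add: add_nonneg_nonneg)
  have i: "integrable lborel (\<lambda>x. ?C * (min (x\<^sup>2) \<bar>x\<bar> * g x))" using gi by simp
  show "integrable lborel (\<lambda>x. (1 - cos (u*x)) * g x)"
  proof (rule Bochner_Integration.integrable_bound[OF i])
    show "(\<lambda>x. (1 - cos (u*x)) * g x) \<in> borel_measurable lborel" by measurable
    show "AE x in lborel. norm ((1 - cos (u*x)) * g x) \<le> norm (?C * (min (x\<^sup>2) \<bar>x\<bar> * g x))"
    proof (rule AE_I2)
      fix x :: real
      have "(1 - cos (u*x)) * \<bar>g x\<bar> \<le> (?C * min (x\<^sup>2) \<bar>x\<bar>) * \<bar>g x\<bar>"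
        by (rule mult_right_mono[OF cos_m]) simp
      thus "norm ((1 - cos (u*x)) * g x) \<le> norm (?C * (min (x\<^sup>2) \<bar>x\<bar> * g x))"
        using C0 by (simp add: abs_mult mult.assoc)
    qed
  qed
  show "integrable lborel (\<lambda>x. (sin (u*x) - u*x) * g x)"
  proof (rule Bochner_Integration.integrable_bound[OF i])
    show "(\<lambda>x. (sin (u*x) - u*x) * g x) \<in> borel_measurable lborel" by measurable
    show "AE x in lborel. norm ((sin (u*x) - u*x) * g x) \<le> norm (?C * (min (x\<^sup>2) \<bar>x\<bar> * g x))"
    proof (rule AE_I2)
      fix x :: real
      have "\<bar>sin (u*x) - u*x\<bar> * \<bar>g x\<bar> \<le> (?C * min (x\<^sup>2) \<bar>x\<bar>) * \<bar>g x\<bar>"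
        by (rule mult_right_mono[OF sin_m]) simp
      thus "norm ((sin (u*x) - u*x) * g x) \<le> norm (?C * (min (x\<^sup>2) \<bar>x\<bar> * g x))"
        using C0 by (simp add: abs_mult mult.assoc)
    qed
  qed
qed

lemma A_decomp:
  fixes g :: "real \<Rightarrow> real"
  assumes gm[measurable]: "g \<in> borel_measurable borel" and gi: "integrable lborel (\<lambda>x. min (x\<^sup>2) \<bar>x\<bar> * g x)"
  shows "A_dens g u = complex_of_real (LINT x|lborel. (1 - cos (u*x)) * g x)
          + \<i> * complex_of_real (LINT x|lborel. (sin (u*x) - u*x) * g x)"
proof -
  let ?F = "\<lambda>x. (1 - cos (u*x)) * g x" and ?G = "\<lambda>x. (sin (u*x) - u*x) * g x"
  have pt: "(exp (- \<i> * complex_of_real (u*x)) - 1 + \<i> * complex_of_real (u*x)) * complex_of_real (g x)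
      = - (complex_of_real (?F x) + \<i> * complex_of_real (?G x))" for x
    by (simp add: complex_eq_iff Re_exp Im_exp algebra_simps)
  have iF: "integrable lborel (\<lambda>x. complex_of_real (?F x))"
    by (rule integrable_of_real) (rule int_kern(1)[OF gm gi])
  have iG: "integrable lborel (\<lambda>x. \<i> * complex_of_real (?G x))"
    by (intro integrable_mult_right integrable_of_real int_kern(2)[OF gm gi])
  have "A_dens g u = - (LINT x|lborel. - (complex_of_real (?F x) + \<i> * complex_of_real (?G x)))"
    unfolding A_dens_def pt ..
  also have "\<dots> = (LINT x|lborel. complex_of_real (?F x) + \<i> * complex_of_real (?G x))"
    by (simp only: integral_minus minus_minus)
  also have "\<dots> = (LINT x|lborel. complex_of_real (?F x)) + (LINT x|lborel. \<i> * complex_of_real (?G x))"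
    by (rule Bochner_Integration.integral_add[OF iF iG])
  also have "\<dots> = complex_of_real (LINT x|lborel. ?F x) + \<i> * complex_of_real (LINT x|lborel. ?G x)"
    by (simp only: integral_complex_of_real integral_mult_right_zero)
  finally show ?thesis .
qed

lemma refl_int:
  fixes \<phi> g :: "real \<Rightarrow> real"
  shows "(LINT x|lborel. \<phi> x * g (-x)) = (LINT x|lborel. \<phi> (-x) * g x)"
  using lborel_integral_real_affine[of "-1" "\<lambda>x. \<phi> (-x) * g x" 0] by simp

lemma fs_int:
  fixes \<phi> f :: "real \<Rightarrow> real"
  assumes i1: "integrable lborel (\<lambda>x. \<phi> x * f x)" and i2: "integrable lborel (\<lambda>x. \<phi> x * f (-x))"
  shows "(LINT x|lborel. \<phi> x * f_s f x) = ((LINT x|lborel. \<phi> x * f x) + (LINT x|lborel. \<phi> (-x) * f x))/2"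
    and "(LINT x|lborel. \<phi> x * f_as f x) = ((LINT x|lborel. \<phi> x * f x) - (LINT x|lborel. \<phi> (-x) * f x))/2"
proof -
  have "(LINT x|lborel. \<phi> x * f_s f x) = (LINT x|lborel. (\<phi> x * f x + \<phi> x * f (-x)) / 2)"
    by (simp add: f_s_def algebra_simps)
  also have "\<dots> = ((LINT x|lborel. \<phi> x * f x) + (LINT x|lborel. \<phi> x * f (-x)))/2"
    using i1 i2 by simp
  finally show "(LINT x|lborel. \<phi> x * f_s f x) = ((LINT x|lborel. \<phi> x * f x) + (LINT x|lborel. \<phi> (-x) * f x))/2"
    by (simp add: refl_int)
  have "(LINT x|lborel. \<phi> x * f_as f x) = (LINT x|lborel. (\<phi> x * f x - \<phi> x * f (-x)) / 2)"
    by (simp add: f_as_def algebra_simps)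
  also have "\<dots> = ((LINT x|lborel. \<phi> x * f x) - (LINT x|lborel. \<phi> x * f (-x)))/2"
    using i1 i2 by simp
  finally show "(LINT x|lborel. \<phi> x * f_as f x) = ((LINT x|lborel. \<phi> x * f x) - (LINT x|lborel. \<phi> (-x) * f x))/2"
    by (simp add: refl_int)
qed

lemma neg_int:
  fixes h :: "real \<Rightarrow> real"
  assumes "integrable lborel h"
  shows "integrable lborel (\<lambda>x. h (-x))"
  using lborel_integrable_real_affine[OF assms, of "-1" 0] by simp




lemma lsetup:
  assumes "special_levy_density f"
  shows "f \<in> borel_measurable borel" "\<And>x. 0 \<le> f x"
    "integrable lborel (\<lambda>x. min (x\<^sup>2) \<bar>x\<bar> * f x)"
    "integrable lborel (\<lambda>x. min (x\<^sup>2) \<bar>x\<bar> * f (-x))"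
    "(\<lambda>x. f (-x)) \<in> borel_measurable borel"
    "f_s f \<in> borel_measurable borel" "f_as f \<in> borel_measurable borel"
    "integrable lborel (\<lambda>x. min (x\<^sup>2) \<bar>x\<bar> * f_s f x)"
    "integrable lborel (\<lambda>x. min (x\<^sup>2) \<bar>x\<bar> * f_as f x)"
    "\<And>x. 0 \<le> f_s f x"
proof -
  show fm[measurable]: "f \<in> borel_measurable borel" and nn: "\<And>x. 0 \<le> f x"
    and i1: "integrable lborel (\<lambda>x. min (x\<^sup>2) \<bar>x\<bar> * f x)"
    using assms unfolding special_levy_density_def by auto
  show i2: "integrable lborel (\<lambda>x. min (x\<^sup>2) \<bar>x\<bar> * f (-x))"
    using neg_int[OF i1] by simp
  show "(\<lambda>x. f (-x)) \<in> borel_measurable borel" by measurable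
  show "f_s f \<in> borel_measurable borel" unfolding f_s_def[abs_def] by measurable
  show "f_as f \<in> borel_measurable borel" unfolding f_as_def[abs_def] by measurable
  have "integrable lborel (\<lambda>x. (min (x\<^sup>2) \<bar>x\<bar> * f x + min (x\<^sup>2) \<bar>x\<bar> * f (-x)) / 2)"
    using i1 i2 by simp
  thus "integrable lborel (\<lambda>x. min (x\<^sup>2) \<bar>x\<bar> * f_s f x)"
    by (simp add: f_s_def algebra_simps add_divide_distrib)
  have "integrable lborel (\<lambda>x. (min (x\<^sup>2) \<bar>x\<bar> * f x - min (x\<^sup>2) \<bar>x\<bar> * f (-x)) / 2)"
    using i1 i2 by simp
  thus "integrable lborel (\<lambda>x. min (x\<^sup>2) \<bar>x\<bar> * f_as f x)"
    by (simp add: f_as_def algebra_simps diff_divide_distrib)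
  show "0 \<le> f_s f x" for x unfolding f_s_def using nn[of x] nn[of "-x"] by simp
qed

lemma ReA:
  assumes "special_levy_density f"
  shows "Re (A_dens f u) = (LINT x|lborel. (1 - cos (u*x)) * f x)"
    and "Im (A_dens f u) = (LINT x|lborel. (sin (u*x) - u*x) * f x)"
  using A_decomp[OF lsetup(1,3)[OF assms], of u] by simp_all

lemma AS:
  assumes L: "special_levy_density f"
  shows "Re (A_dens f u) = (LINT x|lborel. (1 - cos (u*x)) * f_s f x)"
    and "Im (A_dens f u) = (LINT x|lborel. (sin (u*x) - u*x) * f_as f x)"
    and "A_dens (f_s f) u = complex_of_real (Re (A_dens f u))"
    and "A_dens (f_as f) u = \<i> * complex_of_real (Im (A_dens f u))"
proof -
  note s = lsetup[OF L]
  have nm[measurable]: "(\<lambda>x. f (-x)) \<in> borel_measurable borel" by (rule s(5))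
  let ?S = "LINT x|lborel. (1 - cos (u*x)) * f x"
  let ?T = "LINT x|lborel. (sin (u*x) - u*x) * f x"
  have c1: "integrable lborel (\<lambda>x. (1 - cos (u*x)) * f x)" by (rule int_kern(1)[OF s(1,3)])
  have c2: "integrable lborel (\<lambda>x. (1 - cos (u*x)) * f (-x))" by (rule int_kern(1)[OF s(5,4)])
  have s1: "integrable lborel (\<lambda>x. (sin (u*x) - u*x) * f x)" by (rule int_kern(2)[OF s(1,3)])
  have s2: "integrable lborel (\<lambda>x. (sin (u*x) - u*x) * f (-x))" by (rule int_kern(2)[OF s(5,4)])
  have rc: "(LINT x|lborel. (1 - cos (u*(-x))) * f x) = ?S" by simp
  have rs: "(LINT x|lborel. (sin (u*(-x)) - u*(-x)) * f x) = - ?T"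
  proof -
    have "(LINT x|lborel. (sin (u*(-x)) - u*(-x)) * f x) = (LINT x|lborel. - ((sin (u*x) - u*x) * f x))"
      by (simp add: algebra_simps)
    thus ?thesis by (simp only: integral_minus)
  qed
  have fs1: "(LINT x|lborel. (1 - cos (u*x)) * f_s f x) = ?S"
    using fs_int(1)[OF c1 c2] rc by simp
  have fs2: "(LINT x|lborel. (sin (u*x) - u*x) * f_s f x) = 0"
    using fs_int(1)[OF s1 s2] rs by simp
  have fa1: "(LINT x|lborel. (1 - cos (u*x)) * f_as f x) = 0"
    using fs_int(2)[OF c1 c2] rc by simp
  have fa2: "(LINT x|lborel. (sin (u*x) - u*x) * f_as f x) = ?T"
    using fs_int(2)[OF s1 s2] rs by simp
  show "Re (A_dens f u) = (LINT x|lborel. (1 - cos (u*x)) * f_s f x)" using ReA(1)[OF L] fs1 by simp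
  show "Im (A_dens f u) = (LINT x|lborel. (sin (u*x) - u*x) * f_as f x)" using ReA(2)[OF L] fa2 by simp
  show "A_dens (f_s f) u = complex_of_real (Re (A_dens f u))"
    using A_decomp[OF s(6,8), of u] fs1 fs2 ReA(1)[OF L] by simp
  show "A_dens (f_as f) u = \<i> * complex_of_real (Im (A_dens f u))"
    using A_decomp[OF s(7,9), of u] fa1 fa2 ReA(2)[OF L] by simp
qed



lemma big0:
  fixes g :: "real \<Rightarrow> real"
  assumes "g \<in> O[at 0](\<lambda>x. \<bar>x\<bar> powr p)"
  obtains c e where "c > 0" "e > 0" "e \<le> 1" "\<And>x. x \<noteq> 0 \<Longrightarrow> \<bar>x\<bar> < e \<Longrightarrow> \<bar>g x\<bar> \<le> c * \<bar>x\<bar> powr p"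
proof -
  from assms obtain c where c: "c > 0" and ev: "eventually (\<lambda>x. norm (g x) \<le> c * norm (\<bar>x\<bar> powr p)) (at 0)"
    by (elim landau_o.bigE)
  from ev obtain d where d: "d > 0" and hd: "\<And>x. x \<noteq> 0 \<Longrightarrow> dist x 0 < d \<Longrightarrow> norm (g x) \<le> c * norm (\<bar>x\<bar> powr p)"
    unfolding eventually_at by auto
  show ?thesis
  proof (rule that[of c "min d 1"])
    show "c > 0" "min d 1 > 0" "min d 1 \<le> 1" using c d by auto
    fix x :: real assume "x \<noteq> 0" "\<bar>x\<bar> < min d 1"
    thus "\<bar>g x\<bar> \<le> c * \<bar>x\<bar> powr p" using hd[of x] by simp
  qed
qed

lemma m_ge: fixes x e :: real assumes "0 < e" "e \<le> 1" "e \<le> \<bar>x\<bar>" shows "e\<^sup>2 \<le> min (x\<^sup>2) \<bar>x\<bar>"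
proof -
  have "e * e \<le> \<bar>x\<bar> * \<bar>x\<bar>" by (rule mult_mono) (use assms in auto)
  moreover have "e * e \<le> 1 * \<bar>x\<bar>" by (rule mult_mono) (use assms in auto)
  ultimately show ?thesis by (simp add: power2_eq_square)
qed

lemma far_bound: fixes x e v :: real assumes "0 < e" "e \<le> 1" "e \<le> \<bar>x\<bar>" "0 \<le> v"
  shows "v \<le> 1/e\<^sup>2 * (min (x\<^sup>2) \<bar>x\<bar> * v)"
proof -
  have "e\<^sup>2 * v \<le> min (x\<^sup>2) \<bar>x\<bar> * v" by (rule mult_right_mono[OF m_ge]) (use assms in auto)
  thus ?thesis using assms(1) by (simp add: field_simps)
qed

lemma far_bound1: fixes x e v :: real assumes "0 < e" "e \<le> 1" "e \<le> \<bar>x\<bar>" "0 \<le> v"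
  shows "\<bar>x\<bar> * v \<le> 1/e * (min (x\<^sup>2) \<bar>x\<bar> * v)"
proof -
  have "e * \<bar>x\<bar> \<le> min (x\<^sup>2) \<bar>x\<bar>"
  proof -
    have "e * \<bar>x\<bar> \<le> \<bar>x\<bar> * \<bar>x\<bar>" by (rule mult_right_mono) (use assms in auto)
    moreover have "e * \<bar>x\<bar> \<le> 1 * \<bar>x\<bar>" by (rule mult_right_mono) (use assms in auto)
    ultimately show ?thesis by (simp add: power2_eq_square)
  qed
  hence "(e * \<bar>x\<bar>) * v \<le> min (x\<^sup>2) \<bar>x\<bar> * v" by (rule mult_right_mono) (use assms in auto)
  thus ?thesis using assms(1) by (simp add: field_simps)
qed

lemma int_scaled:
  fixes P :: "real \<Rightarrow> real"
  assumes "integrable lborel P" "u \<noteq> 0"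
  shows "integrable lborel (\<lambda>x. K * P (u*x)) \<and> (LINT x|lborel. K * P (u*x)) = K * (integral\<^sup>L lborel P / \<bar>u\<bar>)"
  using scale_int[OF assms] by simp

lemma powr_div_u: fixes u Y :: real assumes "u \<noteq> 0" shows "\<bar>u\<bar> powr (1+Y) / \<bar>u\<bar> = \<bar>u\<bar> powr Y"
  using assms by (simp add: powr_add)




lemma partA:
  fixes f :: "real \<Rightarrow> real" and Y :: real
  assumes L: "special_levy_density f" and Y: "0 < Y" "Y < 2"
    and O: "f_s f \<in> O[at 0](\<lambda>x. \<bar>x\<bar> powr (- (1 + Y)))"
  shows "\<exists>C\<ge>0. \<forall>u::real. A_dens (f_s f) u = complex_of_real (Re (A_dens f u))
          \<and> 0 \<le> Re (A_dens f u) \<and> Re (A_dens f u) \<le> C * (1 + \<bar>u\<bar> powr Y)"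
proof -
  note s = lsetup[OF L]
  have fsm[measurable]: "f_s f \<in> borel_measurable borel" by (rule s(6))
  obtain c e where c: "c > 0" and e: "e > 0" "e \<le> 1"
    and hb0: "\<And>x. x \<noteq> 0 \<Longrightarrow> \<bar>x\<bar> < e \<Longrightarrow> \<bar>f_s f x\<bar> \<le> c * \<bar>x\<bar> powr (- (1 + Y))"
    using big0[OF O] by blast
  let ?P = "PP (1-Y) (-(1+Y))"
  let ?m = "\<lambda>x::real. min (x\<^sup>2) \<bar>x\<bar>"
  have Pi: "integrable lborel ?P" by (rule PP_int) (use Y in auto)
  define I where "I = integral\<^sup>L lborel ?P"
  have I0: "0 \<le> I" unfolding I_def by (rule Bochner_Integration.integral_nonneg) (simp add: PP_nonneg)
  define M where "M = (LINT x|lborel. ?m x * f_s f x)"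
  have M0: "0 \<le> M" unfolding M_def by (rule Bochner_Integration.integral_nonneg) (simp add: s(10))
  define C where "C = 2*c*I + 1/e\<^sup>2 * (2 * M)"
  have C0: "0 \<le> C" unfolding C_def using c I0 M0 e by simp
  have bound: "Re (A_dens f u) \<le> C * (1 + \<bar>u\<bar> powr Y)" for u :: real
  proof (cases "u = 0")
    case True
    hence "Re (A_dens f u) = 0" using ReA(1)[OF L, of u] by simp
    thus ?thesis using C0 by simp
  next
    case u: False
    let ?R = "\<lambda>x. (2*c*\<bar>u\<bar> powr (1+Y)) * ?P (u*x) + 1/e\<^sup>2 * (2 * (?m x * f_s f x))"
    have pt: "(1 - cos (u*x)) * f_s f x \<le> ?R x" for x
    proof -
      have r1: "0 \<le> (2*c*\<bar>u\<bar> powr (1+Y)) * ?P (u*x)" using c by (simp add: PP_nonneg)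
      have r2: "0 \<le> 1/e\<^sup>2 * (2 * (?m x * f_s f x))" using s(10)[of x] by simp
      consider "x = 0" | "x \<noteq> 0" "\<bar>x\<bar> < e" | "e \<le> \<bar>x\<bar>" by linarith
      thus ?thesis
      proof cases
        case 1 thus ?thesis using r1 r2 by simp
      next
        case 2
        have "(1 - cos (u*x)) * f_s f x \<le> (1 - cos (u*x)) * (c * \<bar>x\<bar> powr (- (1 + Y)))"
          by (rule mult_left_mono) (use hb0[OF 2] in auto)
        also have "\<dots> = c * \<bar>u\<bar> powr (1+Y) * ((1 - cos (u*x)) * \<bar>u*x\<bar> powr (-(1+Y)))"
          using powr_scale[OF 2(1) u, of "-(1+Y)"] by (simp add: add.commute)
        also have "\<dots> \<le> c * \<bar>u\<bar> powr (1+Y) * (2 * ?P (u*x))"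
          by (rule mult_left_mono[OF KA]) (use c Y in auto)
        finally show ?thesis using r2 by simp
      next
        case 3
        have "(1 - cos (u*x)) * f_s f x \<le> 2 * f_s f x"
          by (rule mult_right_mono[OF cos_le2 s(10)])
        also have "\<dots> \<le> 1/e\<^sup>2 * (?m x * (2 * f_s f x))"
          by (rule far_bound) (use e 3 s(10)[of x] in auto)
        finally show ?thesis using r1 by (simp add: algebra_simps)
      qed
    qed
    have iL: "integrable lborel (\<lambda>x. (1 - cos (u*x)) * f_s f x)" by (rule int_kern(1)[OF s(6,8)])
    have iR1: "integrable lborel (\<lambda>x. (2*c*\<bar>u\<bar> powr (1+Y)) * ?P (u*x))"
      and vR1: "(LINT x|lborel. (2*c*\<bar>u\<bar> powr (1+Y)) * ?P (u*x)) = (2*c*\<bar>u\<bar> powr (1+Y)) * (I / \<bar>u\<bar>)"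
      using int_scaled[OF Pi u] unfolding I_def by auto
    have iR2: "integrable lborel (\<lambda>x. 1/e\<^sup>2 * (2 * (?m x * f_s f x)))" using s(8) by simp
    have vR2: "(LINT x|lborel. 1/e\<^sup>2 * (2 * (?m x * f_s f x))) = 1/e\<^sup>2 * (2 * M)" unfolding M_def by simp
    have "Re (A_dens f u) = (LINT x|lborel. (1 - cos (u*x)) * f_s f x)" by (rule AS(1)[OF L])
    also have "\<dots> \<le> (LINT x|lborel. ?R x)" by (rule integral_mono[OF iL Bochner_Integration.integrable_add[OF iR1 iR2] pt])
    also have "\<dots> = (2*c*\<bar>u\<bar> powr (1+Y)) * (I / \<bar>u\<bar>) + 1/e\<^sup>2 * (2 * M)"
      using Bochner_Integration.integral_add[OF iR1 iR2] vR1 vR2 by simp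
    also have "\<dots> = 2*c*I * (\<bar>u\<bar> powr (1+Y) / \<bar>u\<bar>) + 1/e\<^sup>2 * (2 * M)"
      by (simp add: divide_inverse ac_simps)
    also have "\<dots> = 2*c*I * \<bar>u\<bar> powr Y + 1/e\<^sup>2 * (2 * M)"
      by (simp only: powr_div_u[OF u])
    also have "\<dots> \<le> C * (1 + \<bar>u\<bar> powr Y)"
    proof -
      have "0 \<le> 1/e\<^sup>2 * (2 * M) * \<bar>u\<bar> powr Y" using M0 by simp
      moreover have "0 \<le> 2*c*I" using c I0 by simp
      moreover have "C * (1 + \<bar>u\<bar> powr Y) = 2*c*I + 2*c*I * \<bar>u\<bar> powr Y + 1/e\<^sup>2 * (2 * M) + 1/e\<^sup>2 * (2 * M) * \<bar>u\<bar> powr Y"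
        unfolding C_def by (simp add: algebra_simps add_divide_distrib)
      ultimately show ?thesis by linarith
    qed
    finally show ?thesis .
  qed
  have nonneg: "0 \<le> Re (A_dens f u)" for u :: real
    unfolding AS(1)[OF L] by (rule Bochner_Integration.integral_nonneg) (simp add: s(10))
  show ?thesis using C0 bound nonneg AS(3)[OF L] by blast
qed



lemma partB:
  fixes f :: "real \<Rightarrow> real" and Y :: real
  assumes L: "special_levy_density f" and Y: "0 < Y" "Y < 2"
    and H: "\<exists>C>0. \<exists>g::real \<Rightarrow> real. \<exists>\<delta>>0. (\<forall>x. x \<noteq> 0 \<longrightarrow> f_s f x = C / \<bar>x\<bar> powr (1 + Y) + g x)
          \<and> g \<in> O[at 0](\<lambda>x. \<bar>x\<bar> powr (- (1 + Y - \<delta>)))"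
  shows "\<exists>C1>0. \<exists>C2\<ge>0. \<exists>Y'. 0 < Y' \<and> Y' < Y \<and>
         (\<forall>u::real. A_dens (f_s f) u = complex_of_real (Re (A_dens f u))
          \<and> Re (A_dens f u) \<ge> C1 * \<bar>u\<bar> powr Y - C2 * (1 + \<bar>u\<bar> powr Y'))"
proof -
  note s = lsetup[OF L]
  have fsm[measurable]: "f_s f \<in> borel_measurable borel" by (rule s(6))
  obtain C0 g \<delta> where C0: "C0 > 0" and dl: "\<delta> > 0"
    and hf: "\<And>x. x \<noteq> 0 \<Longrightarrow> f_s f x = C0 / \<bar>x\<bar> powr (1 + Y) + g x"
    and hg: "g \<in> O[at 0](\<lambda>x. \<bar>x\<bar> powr (- (1 + Y - \<delta>)))"
    using H by blast
  obtain K e where K: "K > 0" and e: "e > 0" "e \<le> 1"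
    and hg0: "\<And>x. x \<noteq> 0 \<Longrightarrow> \<bar>x\<bar> < e \<Longrightarrow> \<bar>g x\<bar> \<le> K * \<bar>x\<bar> powr (- (1 + Y - \<delta>))"
    using big0[OF hg] by blast
  define a where "a = Y - min \<delta> (Y/2)"
  have a: "0 < a" "a < Y" "a < 2" "Y - \<delta> \<le> a" using Y dl unfolding a_def by auto
  have hg1: "\<bar>g x\<bar> \<le> K * \<bar>x\<bar> powr (- (1 + a))" if "x \<noteq> 0" "\<bar>x\<bar> < e" for x
  proof -
    have "\<bar>x\<bar> powr (- (1 + Y - \<delta>)) \<le> \<bar>x\<bar> powr (- (1 + a))"
      by (rule powr_mono') (use a(4) that e in auto)
    thus ?thesis using hg0[OF that] K by (smt (verit) mult_left_mono)
  qed
  let ?rho = "\<lambda>y::real. indicator {-1..1} y * \<bar>y\<bar> powr (1-Y) / 4"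
  let ?Q = "PP (1-a) (-(1+a))"
  have rI: "integrable lborel (\<lambda>y. indicator {-1..1} y * \<bar>y\<bar> powr (1-Y))"
    and rV: "integral\<^sup>L lborel (\<lambda>y. indicator {-1..1} y * \<bar>y\<bar> powr (1-Y)) = 2/(2-Y)"
    using P1[of "1-Y"] Y by auto
  have rhoI: "integrable lborel ?rho" using rI by simp
  define J where "J = integral\<^sup>L lborel ?rho"
  have JV: "J = 2/(2-Y)/4" unfolding J_def using rV by simp
  have Qi: "integrable lborel ?Q" by (rule PP_int) (use a in auto)
  define IQ where "IQ = integral\<^sup>L lborel ?Q"
  have IQ0: "0 \<le> IQ" unfolding IQ_def by (rule Bochner_Integration.integral_nonneg) (simp add: PP_nonneg)
  define C1 where "C1 = C0 * J"
  have C1: "C1 > 0" unfolding C1_def JV using C0 Y by simp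
  define C2 where "C2 = 2*K*IQ + C1 * (1/e) powr Y"
  have C2: "C2 \<ge> 0" unfolding C2_def using K IQ0 C1 by simp
  have nonneg: "0 \<le> Re (A_dens f u)" for u :: real
    unfolding AS(1)[OF L] by (rule Bochner_Integration.integral_nonneg) (simp add: s(10))
  have bound: "Re (A_dens f u) \<ge> C1 * \<bar>u\<bar> powr Y - C2 * (1 + \<bar>u\<bar> powr a)" for u :: real
  proof (cases "\<bar>u\<bar> * e \<le> 1")
    case True
    have "\<bar>u\<bar> \<le> 1/e" using True e by (simp add: field_simps)
    hence "\<bar>u\<bar> powr Y \<le> (1/e) powr Y" using powr_mono2[of Y "\<bar>u\<bar>" "1/e"] Y by simp
    hence "C1 * \<bar>u\<bar> powr Y \<le> C1 * (1/e) powr Y" using C1 by simp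
    moreover have "C1 * (1/e) powr Y \<le> C2" unfolding C2_def using K IQ0 by simp
    moreover have "C2 \<le> C2 * (1 + \<bar>u\<bar> powr a)" using mult_nonneg_nonneg[OF C2 powr_ge_zero[of "\<bar>u\<bar>" a]] by (simp add: distrib_left)
    ultimately show ?thesis using nonneg[of u] by linarith
  next
    case False
    hence u: "u \<noteq> 0" by auto
    let ?R = "\<lambda>x. (C0 * \<bar>u\<bar> powr (1+Y)) * ?rho (u*x) - (2*K*\<bar>u\<bar> powr (1+a)) * ?Q (u*x)"
    have pt: "?R x \<le> (1 - cos (u*x)) * f_s f x" for x
    proof -
      have q0: "0 \<le> (2*K*\<bar>u\<bar> powr (1+a)) * ?Q (u*x)" using K by (simp add: PP_nonneg)
      consider "x = 0" | "x \<noteq> 0" "\<bar>x\<bar> < e" | "e \<le> \<bar>x\<bar>" by linarith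
      thus ?thesis
      proof cases
        case 1 thus ?thesis by (simp add: PP_0)
      next
        case 2
        have lowf: "C0 * \<bar>x\<bar> powr (- (1 + Y)) - K * \<bar>x\<bar> powr (- (1 + a)) \<le> f_s f x"
        proof -
          have "C0 / \<bar>x\<bar> powr (1 + Y) = C0 * \<bar>x\<bar> powr (- (1 + Y))" by (simp only: powr_minus divide_inverse)
          thus ?thesis using hf[OF 2(1)] hg1[OF 2] by linarith
        qed
        have cc: "0 \<le> 1 - cos (u*x)" by simp
        have A1: "C0 * \<bar>u\<bar> powr (1+Y) * ?rho (u*x) \<le> (1 - cos (u*x)) * (C0 * \<bar>x\<bar> powr (- (1 + Y)))"
        proof -
          have "C0 * \<bar>u\<bar> powr (1+Y) * ?rho (u*x) \<le> C0 * \<bar>u\<bar> powr (1+Y) * ((1 - cos (u*x)) * \<bar>u*x\<bar> powr (-(1+Y)))"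
            by (rule mult_left_mono[OF KL]) (use C0 in auto)
          also have "\<dots> = (1 - cos (u*x)) * (C0 * \<bar>x\<bar> powr (- (1 + Y)))"
            using powr_scale[OF 2(1) u, of "-(1+Y)"] by (simp add: add.commute)
          finally show ?thesis .
        qed
        have A2: "(1 - cos (u*x)) * (K * \<bar>x\<bar> powr (- (1 + a))) \<le> (2*K*\<bar>u\<bar> powr (1+a)) * ?Q (u*x)"
        proof -
          have "(1 - cos (u*x)) * (K * \<bar>x\<bar> powr (- (1 + a)))
              = K * \<bar>u\<bar> powr (1+a) * ((1 - cos (u*x)) * \<bar>u*x\<bar> powr (-(1+a)))"
            using powr_scale[OF 2(1) u, of "-(1+a)"] by (simp add: add.commute)
          also have "\<dots> \<le> K * \<bar>u\<bar> powr (1+a) * (2 * ?Q (u*x))"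
            by (rule mult_left_mono[OF KA]) (use K a in auto)
          finally show ?thesis by simp
        qed
        have "(1 - cos (u*x)) * (C0 * \<bar>x\<bar> powr (- (1 + Y)) - K * \<bar>x\<bar> powr (- (1 + a))) \<le> (1 - cos (u*x)) * f_s f x"
          by (rule mult_left_mono[OF lowf cc])
        thus ?thesis using A1 A2 by (simp add: right_diff_distrib)
      next
        case 3
        have "1 < \<bar>u\<bar> * e" using False by simp
        also have "\<dots> \<le> \<bar>u\<bar> * \<bar>x\<bar>" by (rule mult_left_mono) (use 3 in auto)
        finally have h: "1 < \<bar>u*x\<bar>" by (simp add: abs_mult)
        have "u*x \<notin> {-1..1}" using h by (cases "u*x \<ge> 0") auto
        hence ind0: "indicator {-1..1} (u*x) = (0::real)" by simp
        have "0 \<le> (1 - cos (u*x)) * f_s f x" using s(10)[of x] by simp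
        thus ?thesis using q0 by (simp only: ind0 mult_zero_left mult_zero_right div_0 diff_0)
      qed
    qed
    have iL: "integrable lborel (\<lambda>x. (1 - cos (u*x)) * f_s f x)" by (rule int_kern(1)[OF s(6,8)])
    have iR1: "integrable lborel (\<lambda>x. (C0 * \<bar>u\<bar> powr (1+Y)) * ?rho (u*x))"
      and vR1: "(LINT x|lborel. (C0 * \<bar>u\<bar> powr (1+Y)) * ?rho (u*x)) = (C0 * \<bar>u\<bar> powr (1+Y)) * (J / \<bar>u\<bar>)"
      using int_scaled[OF rhoI u, of "C0 * \<bar>u\<bar> powr (1+Y)"] unfolding J_def by auto
    have iR2: "integrable lborel (\<lambda>x. (2*K*\<bar>u\<bar> powr (1+a)) * ?Q (u*x))"
      and vR2: "(LINT x|lborel. (2*K*\<bar>u\<bar> powr (1+a)) * ?Q (u*x)) = (2*K*\<bar>u\<bar> powr (1+a)) * (IQ / \<bar>u\<bar>)"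
      using int_scaled[OF Qi u] unfolding IQ_def by auto
    have "(C0 * \<bar>u\<bar> powr (1+Y)) * (J / \<bar>u\<bar>) - (2*K*\<bar>u\<bar> powr (1+a)) * (IQ / \<bar>u\<bar>)
        = (LINT x|lborel. ?R x)"
      using Bochner_Integration.integral_diff[OF iR1 iR2] vR1 vR2 by simp
    also have "\<dots> \<le> (LINT x|lborel. (1 - cos (u*x)) * f_s f x)"
      by (rule integral_mono[OF Bochner_Integration.integrable_diff[OF iR1 iR2] iL pt])
    also have "\<dots> = Re (A_dens f u)" by (rule AS(1)[OF L, symmetric])
    finally have low: "(C0 * \<bar>u\<bar> powr (1+Y)) * (J / \<bar>u\<bar>) - (2*K*\<bar>u\<bar> powr (1+a)) * (IQ / \<bar>u\<bar>) \<le> Re (A_dens f u)" .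
    have e1: "(C0 * \<bar>u\<bar> powr (1+Y)) * (J / \<bar>u\<bar>) = C1 * \<bar>u\<bar> powr Y"
    proof -
      have "(C0 * \<bar>u\<bar> powr (1+Y)) * (J / \<bar>u\<bar>) = C0 * J * (\<bar>u\<bar> powr (1+Y) / \<bar>u\<bar>)"
        by (simp add: divide_inverse ac_simps)
      thus ?thesis unfolding C1_def by (simp only: powr_div_u[OF u])
    qed
    have e2: "(2*K*\<bar>u\<bar> powr (1+a)) * (IQ / \<bar>u\<bar>) = 2*K*IQ * \<bar>u\<bar> powr a"
    proof -
      have "(2*K*\<bar>u\<bar> powr (1+a)) * (IQ / \<bar>u\<bar>) = 2*K*IQ * (\<bar>u\<bar> powr (1+a) / \<bar>u\<bar>)"
        by (simp add: divide_inverse ac_simps)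
      thus ?thesis by (simp only: powr_div_u[OF u])
    qed
    have "2*K*IQ * \<bar>u\<bar> powr a \<le> C2 * (1 + \<bar>u\<bar> powr a)"
    proof -
      have "2*K*IQ \<le> C2" unfolding C2_def using C1 by simp
      hence "2*K*IQ * \<bar>u\<bar> powr a \<le> C2 * \<bar>u\<bar> powr a" by (rule mult_right_mono) simp
      thus ?thesis using C2 by (simp add: algebra_simps)
    qed
    thus ?thesis using low e1 e2 by linarith
  qed
  show ?thesis
    using C1 C2 a(1,2) bound AS(3)[OF L] by blast
qed



lemma pow_max_le:
  fixes t Y :: real assumes "0 \<le> t" "0 < Y"
  shows "1 + t + t powr Y \<le> 3 * (1 + t powr (max 1 Y))"
proof (cases "t \<le> 1")
  case True
  have "t powr Y \<le> 1 powr Y" by (rule powr_mono2) (use assms True in auto)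
  hence "t powr Y \<le> 1" by simp
  moreover have "0 \<le> t powr (max 1 Y)" by simp
  moreover have "3 * (1 + t powr (max 1 Y)) = 3 + 3 * t powr (max 1 Y)" by simp
  ultimately show ?thesis using True by linarith
next
  case False
  have "t powr 1 \<le> t powr (max 1 Y)" by (rule powr_mono) (use False in auto)
  moreover have "t powr Y \<le> t powr (max 1 Y)" by (rule powr_mono) (use False in auto)
  moreover have "3 * (1 + t powr (max 1 Y)) = 3 + 3 * t powr (max 1 Y)" by simp
  moreover have "t powr 1 = t" using assms(1) by simp
  ultimately show ?thesis using False by linarith
qed

lemma partC_T:
  fixes f :: "real \<Rightarrow> real" and Y :: real
  assumes L: "special_levy_density f" and Y: "0 < Y" "Y < 2" "Y \<noteq> 1"
    and O: "f_as f \<in> O[at 0](\<lambda>x. \<bar>x\<bar> powr (- (1 + Y)))"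
  shows "\<exists>C\<ge>0. \<forall>u::real. \<bar>LINT x|lborel. (sin (u*x) - u*x) * f_as f x\<bar> \<le> C * (1 + \<bar>u\<bar> + \<bar>u\<bar> powr Y)"
proof -
  note s = lsetup[OF L]
  have fam[measurable]: "f_as f \<in> borel_measurable borel" by (rule s(7))
  obtain c e where c: "c > 0" and e: "e > 0" "e \<le> 1"
    and hb0: "\<And>x. x \<noteq> 0 \<Longrightarrow> \<bar>x\<bar> < e \<Longrightarrow> \<bar>f_as f x\<bar> \<le> c * \<bar>x\<bar> powr (- (1 + Y))"
    using big0[OF O] by blast
  let ?m = "\<lambda>x::real. min (x\<^sup>2) \<bar>x\<bar>"
  have mi: "integrable lborel (\<lambda>x. ?m x * \<bar>f_as f x\<bar>)"
  proof -
    have "integrable lborel (\<lambda>x. \<bar>?m x * f_as f x\<bar>)" using s(9) by (rule integrable_abs)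
    moreover have "\<bar>?m x * f_as f x\<bar> = ?m x * \<bar>f_as f x\<bar>" for x by (simp add: abs_mult)
    ultimately show ?thesis by simp
  qed
  define M where "M = (LINT x|lborel. ?m x * \<bar>f_as f x\<bar>)"
  have M0: "0 \<le> M" unfolding M_def by (rule Bochner_Integration.integral_nonneg) simp
  let ?T = "\<lambda>u. LINT x|lborel. (sin (u*x) - u*x) * f_as f x"
  have far: "\<bar>(sin (u*x) - u*x) * f_as f x\<bar> \<le> 2*\<bar>u\<bar>/e * (?m x * \<bar>f_as f x\<bar>)" if "e \<le> \<bar>x\<bar>" for u x
  proof -
    have "\<bar>(sin (u*x) - u*x) * f_as f x\<bar> \<le> (2*\<bar>u*x\<bar>) * \<bar>f_as f x\<bar>"
      by (subst abs_mult, rule mult_right_mono[OF sin_lin]) simp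
    also have "\<dots> = 2*\<bar>u\<bar> * (\<bar>x\<bar> * \<bar>f_as f x\<bar>)" by (simp add: abs_mult)
    also have "\<dots> \<le> 2*\<bar>u\<bar> * (1/e * (?m x * \<bar>f_as f x\<bar>))"
      by (rule mult_left_mono[OF far_bound1]) (use e that in auto)
    finally show ?thesis by simp
  qed
  have iL: "integrable lborel (\<lambda>x. (sin (u*x) - u*x) * f_as f x)" for u by (rule int_kern(2)[OF s(7,9)])
  have iM: "integrable lborel (\<lambda>x. 2*\<bar>u\<bar>/e * (?m x * \<bar>f_as f x\<bar>))" for u using mi by simp
  have vM: "(LINT x|lborel. 2*\<bar>u\<bar>/e * (?m x * \<bar>f_as f x\<bar>)) = 2*\<bar>u\<bar>/e * M" for u unfolding M_def by simp
  show ?thesis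
  proof (cases "Y < 1")
    case Y1: True
    let ?F = "\<lambda>x::real. indicator {-1..1} x * \<bar>x\<bar> powr (-Y)"
    have Fi: "integrable lborel ?F" using P1[of "-Y"] Y1 by simp
    define IF where "IF = integral\<^sup>L lborel ?F"
    have IF0: "0 \<le> IF" unfolding IF_def by (rule Bochner_Integration.integral_nonneg) simp
    define C where "C = 2*c*IF + 2*M/e"
    have C0: "0 \<le> C" unfolding C_def using c IF0 M0 e by simp
    have "\<bar>?T u\<bar> \<le> C * (1 + \<bar>u\<bar> + \<bar>u\<bar> powr Y)" for u
    proof -
      let ?R = "\<lambda>x. (2*c*\<bar>u\<bar>) * ?F x + 2*\<bar>u\<bar>/e * (?m x * \<bar>f_as f x\<bar>)"
      have pt: "\<bar>(sin (u*x) - u*x) * f_as f x\<bar> \<le> ?R x" for x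
      proof -
        have r1: "0 \<le> (2*c*\<bar>u\<bar>) * ?F x" using c by simp
        have r2: "0 \<le> 2*\<bar>u\<bar>/e * (?m x * \<bar>f_as f x\<bar>)" using e by simp
        consider "x = 0" | "x \<noteq> 0" "\<bar>x\<bar> < e" | "e \<le> \<bar>x\<bar>" by linarith
        thus ?thesis
        proof cases
          case 1 thus ?thesis using r1 r2 by simp
        next
          case 2
          have "\<bar>(sin (u*x) - u*x) * f_as f x\<bar> \<le> (2*\<bar>u*x\<bar>) * \<bar>f_as f x\<bar>"
            by (subst abs_mult, rule mult_right_mono[OF sin_lin]) simp
          also have "\<dots> \<le> (2*\<bar>u*x\<bar>) * (c * \<bar>x\<bar> powr (- (1 + Y)))"
            by (rule mult_left_mono[OF hb0[OF 2]]) simp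
          also have "\<dots> = (2*c*\<bar>u\<bar>) * (\<bar>x\<bar> * \<bar>x\<bar> powr (- (1 + Y)))" by (simp add: abs_mult)
          also have "\<dots> = (2*c*\<bar>u\<bar>) * \<bar>x\<bar> powr (-Y)" using pw1[OF 2(1), of "- (1 + Y)"] by simp
          also have "\<dots> = (2*c*\<bar>u\<bar>) * ?F x"
          proof -
            have "x \<in> {-1..1}" using 2 e by auto
            thus ?thesis by simp
          qed
          finally show ?thesis using r2 by simp
        next
          case 3 thus ?thesis using far[OF 3, of u] r1 by linarith
        qed
      qed
      have iR1: "integrable lborel (\<lambda>x. (2*c*\<bar>u\<bar>) * ?F x)" using Fi by simp
      have "\<bar>?T u\<bar> \<le> (LINT x|lborel. ?R x)"
        by (rule integral_abs_bound_integral[OF iL Bochner_Integration.integrable_add[OF iR1 iM] pt])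
      also have "\<dots> = (2*c*\<bar>u\<bar>) * IF + 2*\<bar>u\<bar>/e * M"
        using Bochner_Integration.integral_add[OF iR1 iM] vM unfolding IF_def by simp
      also have "\<dots> = C * \<bar>u\<bar>" unfolding C_def by (simp add: algebra_simps)
      also have "\<dots> \<le> C * (1 + \<bar>u\<bar> + \<bar>u\<bar> powr Y)" by (rule mult_left_mono) (use C0 in auto)
      finally show ?thesis .
    qed
    thus ?thesis using C0 by blast
  next
    case False
    hence Y1: "1 < Y" using Y by simp
    let ?W = "PP (1-Y) (-Y)"
    have Wi: "integrable lborel ?W" by (rule PP_int) (use Y Y1 in auto)
    define IW where "IW = integral\<^sup>L lborel ?W"
    have IW0: "0 \<le> IW" unfolding IW_def by (rule Bochner_Integration.integral_nonneg) (simp add: PP_nonneg)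
    define C where "C = 2*c*IW + 2*M/e"
    have C0: "0 \<le> C" unfolding C_def using c IW0 M0 e by simp
    have "\<bar>?T u\<bar> \<le> C * (1 + \<bar>u\<bar> + \<bar>u\<bar> powr Y)" for u
    proof (cases "u = 0")
      case True thus ?thesis using C0 by simp
    next
      case u: False
      let ?R = "\<lambda>x. (2*c*\<bar>u\<bar> powr (1+Y)) * ?W (u*x) + 2*\<bar>u\<bar>/e * (?m x * \<bar>f_as f x\<bar>)"
      have pt: "\<bar>(sin (u*x) - u*x) * f_as f x\<bar> \<le> ?R x" for x
      proof -
        have r1: "0 \<le> (2*c*\<bar>u\<bar> powr (1+Y)) * ?W (u*x)" using c by (simp add: PP_nonneg)
        have r2: "0 \<le> 2*\<bar>u\<bar>/e * (?m x * \<bar>f_as f x\<bar>)" using e by simp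
        consider "x = 0" | "x \<noteq> 0" "\<bar>x\<bar> < e" | "e \<le> \<bar>x\<bar>" by linarith
        thus ?thesis
        proof cases
          case 1 thus ?thesis using r1 r2 by simp
        next
          case 2
          have "\<bar>(sin (u*x) - u*x) * f_as f x\<bar> \<le> \<bar>sin (u*x) - u*x\<bar> * (c * \<bar>x\<bar> powr (- (1 + Y)))"
            by (subst abs_mult, rule mult_left_mono[OF hb0[OF 2]]) simp
          also have "\<dots> = c * \<bar>u\<bar> powr (1+Y) * (\<bar>sin (u*x) - u*x\<bar> * \<bar>u*x\<bar> powr (-(1+Y)))"
            using powr_scale[OF 2(1) u, of "-(1+Y)"] by (simp add: add.commute)
          also have "\<dots> \<le> c * \<bar>u\<bar> powr (1+Y) * (2 * ?W (u*x))"
            by (rule mult_left_mono[OF KC]) (use c in auto)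
          finally show ?thesis using r2 by simp
        next
          case 3 thus ?thesis using far[OF 3, of u] r1 by linarith
        qed
      qed
      have iR1: "integrable lborel (\<lambda>x. (2*c*\<bar>u\<bar> powr (1+Y)) * ?W (u*x))"
        and vR1: "(LINT x|lborel. (2*c*\<bar>u\<bar> powr (1+Y)) * ?W (u*x)) = (2*c*\<bar>u\<bar> powr (1+Y)) * (IW / \<bar>u\<bar>)"
        using int_scaled[OF Wi u] unfolding IW_def by auto
      have "\<bar>?T u\<bar> \<le> (LINT x|lborel. ?R x)"
        by (rule integral_abs_bound_integral[OF iL Bochner_Integration.integrable_add[OF iR1 iM] pt])
      also have "\<dots> = (2*c*\<bar>u\<bar> powr (1+Y)) * (IW / \<bar>u\<bar>) + 2*\<bar>u\<bar>/e * M"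
        using Bochner_Integration.integral_add[OF iR1 iM] vM vR1 by simp
      also have "\<dots> = 2*c*IW * (\<bar>u\<bar> powr (1+Y) / \<bar>u\<bar>) + 2*\<bar>u\<bar>/e * M"
        by (simp add: divide_inverse ac_simps)
      also have "\<dots> = 2*c*IW * \<bar>u\<bar> powr Y + 2*M/e * \<bar>u\<bar>"
        by (simp only: powr_div_u[OF u]) simp
      also have "\<dots> \<le> C * (1 + \<bar>u\<bar> + \<bar>u\<bar> powr Y)"
      proof -
        have a1: "0 \<le> 2*c*IW" "0 \<le> 2*M/e" using c IW0 M0 e by auto
        have "C * (1 + \<bar>u\<bar> + \<bar>u\<bar> powr Y) = (2*c*IW + 2*M/e) + (2*c*IW + 2*M/e) * \<bar>u\<bar> + (2*c*IW + 2*M/e) * \<bar>u\<bar> powr Y"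
          unfolding C_def by (simp add: algebra_simps add_divide_distrib)
        moreover have "0 \<le> 2*c*IW * \<bar>u\<bar>" "0 \<le> 2*M/e * \<bar>u\<bar> powr Y" using a1 M0 e by simp_all
        ultimately show ?thesis using a1 by (simp add: algebra_simps)
      qed
      finally show ?thesis .
    qed
    thus ?thesis using C0 by blast
  qed
qed

lemma partC:
  fixes f :: "real \<Rightarrow> real" and Y :: real
  assumes L: "special_levy_density f" and Y: "0 < Y" "Y < 2"
  shows "(f_as f \<in> O[at 0](\<lambda>x. \<bar>x\<bar> powr (- (1 + Y))) \<and> Y \<noteq> 1) \<longrightarrow>
      (\<exists>C\<ge>0. \<exists>C1\<ge>0. \<forall>u::real. \<bar>Im (A_dens f u)\<bar> = cmod (A_dens (f_as f) u)
          \<and> cmod (A_dens (f_as f) u) \<le> C * (1 + \<bar>u\<bar> + \<bar>u\<bar> powr Y)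
          \<and> C * (1 + \<bar>u\<bar> + \<bar>u\<bar> powr Y) \<le> C1 * (1 + \<bar>u\<bar> powr (max 1 Y)))"
proof
  assume h: "f_as f \<in> O[at 0](\<lambda>x. \<bar>x\<bar> powr (- (1 + Y))) \<and> Y \<noteq> 1"
  obtain C where C0: "C \<ge> 0"
    and hC: "\<And>u. \<bar>LINT x|lborel. (sin (u*x) - u*x) * f_as f x\<bar> \<le> C * (1 + \<bar>u\<bar> + \<bar>u\<bar> powr Y)"
    using partC_T[OF L Y(1,2) _ ] h by blast
  have cm: "cmod (A_dens (f_as f) u) = \<bar>Im (A_dens f u)\<bar>" for u
    unfolding AS(4)[OF L] by (simp add: norm_mult)
  have all: "\<bar>Im (A_dens f u)\<bar> = cmod (A_dens (f_as f) u)
          \<and> cmod (A_dens (f_as f) u) \<le> C * (1 + \<bar>u\<bar> + \<bar>u\<bar> powr Y)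
          \<and> C * (1 + \<bar>u\<bar> + \<bar>u\<bar> powr Y) \<le> (3*C) * (1 + \<bar>u\<bar> powr (max 1 Y))" for u
  proof (intro conjI)
    show "\<bar>Im (A_dens f u)\<bar> = cmod (A_dens (f_as f) u)" using cm by simp
    show "cmod (A_dens (f_as f) u) \<le> C * (1 + \<bar>u\<bar> + \<bar>u\<bar> powr Y)"
      using cm[of u] AS(2)[OF L, of u] hC[of u] by simp
    have "C * (1 + \<bar>u\<bar> + \<bar>u\<bar> powr Y) \<le> C * (3 * (1 + \<bar>u\<bar> powr (max 1 Y)))"
      by (rule mult_left_mono[OF pow_max_le]) (use C0 Y in auto)
    moreover have "C * (3 * (1 + \<bar>u\<bar> powr (max 1 Y))) = (3*C) * (1 + \<bar>u\<bar> powr (max 1 Y))"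
      by (simp only: mult.assoc mult.commute mult.left_commute)
    ultimately show "C * (1 + \<bar>u\<bar> + \<bar>u\<bar> powr Y) \<le> (3*C) * (1 + \<bar>u\<bar> powr (max 1 Y))" by linarith
  qed
  show "\<exists>C\<ge>0. \<exists>C1\<ge>0. \<forall>u::real. \<bar>Im (A_dens f u)\<bar> = cmod (A_dens (f_as f) u)
          \<and> cmod (A_dens (f_as f) u) \<le> C * (1 + \<bar>u\<bar> + \<bar>u\<bar> powr Y)
          \<and> C * (1 + \<bar>u\<bar> + \<bar>u\<bar> powr Y) \<le> C1 * (1 + \<bar>u\<bar> powr (max 1 Y))"
  proof -
    have "0 \<le> 3*C" using C0 by simp
    thus ?thesis using C0 all by blast
  qed
qed



lemma partD:
  fixes f :: "real \<Rightarrow> real" and Y b :: real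
  assumes L: "special_levy_density f" and Y: "0 < Y"
    and h: "Y < 1 \<and> f_as f \<in> O[at 0](\<lambda>x. \<bar>x\<bar> powr (- (1 + Y)))
        \<and> integrable lborel (\<lambda>x. \<bar>x\<bar> * f x) \<and> b = (LINT x|lborel. x * f x)"
  shows "\<exists>C\<ge>0. \<forall>u::real. \<bar>Im (levy_symbol b f u)\<bar> \<le> C * (1 + \<bar>u\<bar> powr Y)"
proof -
  note s = lsetup[OF L]
  have fm[measurable]: "f \<in> borel_measurable borel" by (rule s(1))
  have fam[measurable]: "f_as f \<in> borel_measurable borel" by (rule s(7))
  have Y1: "Y < 1" and O: "f_as f \<in> O[at 0](\<lambda>x. \<bar>x\<bar> powr (- (1 + Y)))"
    and xi: "integrable lborel (\<lambda>x. \<bar>x\<bar> * f x)" and bdef: "b = (LINT x|lborel. x * f x)" using h by auto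
  obtain c e where c: "c > 0" and e: "e > 0" "e \<le> 1"
    and hb0: "\<And>x. x \<noteq> 0 \<Longrightarrow> \<bar>x\<bar> < e \<Longrightarrow> \<bar>f_as f x\<bar> \<le> c * \<bar>x\<bar> powr (- (1 + Y))"
    using big0[OF O] by blast
  have xfi: "integrable lborel (\<lambda>x. x * f x)"
    by (rule Bochner_Integration.integrable_bound[OF xi]) (auto simp: abs_mult s(2))
  have sini: "integrable lborel (\<lambda>x. sin (u*x) * f x)" for u
  proof (rule Bochner_Integration.integrable_bound)
    show "integrable lborel (\<lambda>x. \<bar>u\<bar> * (\<bar>x\<bar> * f x))" using xi by simp
    show "(\<lambda>x. sin (u*x) * f x) \<in> borel_measurable lborel" by measurable
    show "AE x in lborel. norm (sin (u*x) * f x) \<le> norm (\<bar>u\<bar> * (\<bar>x\<bar> * f x))"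
    proof (rule AE_I2)
      fix x
      have "\<bar>sin (u*x)\<bar> * f x \<le> \<bar>u*x\<bar> * f x" by (rule mult_right_mono[OF abs_sin_x_le_abs_x s(2)])
      thus "norm (sin (u*x) * f x) \<le> norm (\<bar>u\<bar> * (\<bar>x\<bar> * f x))" using s(2)[of x] by (simp add: abs_mult)
    qed
  qed
  have sini2: "integrable lborel (\<lambda>x. sin (u*x) * f (-x))" for u
  proof -
    have "integrable lborel (\<lambda>x. - (sin (u*x) * f x))" using sini[of u] by simp
    hence "integrable lborel (\<lambda>x. sin (u*(-x)) * f x)" by simp
    from neg_int[OF this] show ?thesis by simp
  qed
  have ImS: "Im (levy_symbol b f u) = (LINT x|lborel. sin (u*x) * f_as f x)" for u
  proof -
    have "Im (A_dens f u) = (LINT x|lborel. sin (u*x) * f x - u * (x * f x))"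
      unfolding ReA(2)[OF L] by (simp add: algebra_simps)
    also have "\<dots> = (LINT x|lborel. sin (u*x) * f x) - u * b"
      using sini[of u] xfi bdef by simp
    finally have "Im (levy_symbol b f u) = (LINT x|lborel. sin (u*x) * f x)"
      unfolding levy_symbol_def by simp
    moreover have "(LINT x|lborel. sin (u*(-x)) * f x) = - (LINT x|lborel. sin (u*x) * f x)"
    proof -
      have "(LINT x|lborel. sin (u*(-x)) * f x) = (LINT x|lborel. - (sin (u*x) * f x))" by simp
      thus ?thesis by (simp only: integral_minus)
    qed
    ultimately show ?thesis using fs_int(2)[OF sini sini2, of u] by simp
  qed
  let ?F = "PP (-Y) (-(1+Y))"
  have Fi: "integrable lborel ?F" by (rule PP_int) (use Y Y1 in auto)
  define IF where "IF = integral\<^sup>L lborel ?F"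
  have IF0: "0 \<le> IF" unfolding IF_def by (rule Bochner_Integration.integral_nonneg) (simp add: PP_nonneg)
  have Ni: "integrable lborel (\<lambda>x. \<bar>x\<bar> * \<bar>f_as f x\<bar>)"
  proof (rule Bochner_Integration.integrable_bound)
    have "integrable lborel (\<lambda>x. \<bar>-x\<bar> * f (-x))" using neg_int[OF xi] by simp
    thus "integrable lborel (\<lambda>x. \<bar>x\<bar> * f x + \<bar>x\<bar> * f (-x))" using xi by simp
    show "(\<lambda>x. \<bar>x\<bar> * \<bar>f_as f x\<bar>) \<in> borel_measurable lborel" by measurable
    show "AE x in lborel. norm (\<bar>x\<bar> * \<bar>f_as f x\<bar>) \<le> norm (\<bar>x\<bar> * f x + \<bar>x\<bar> * f (-x))"
    proof (rule AE_I2)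
      fix x :: real
      have "\<bar>f_as f x\<bar> \<le> f x + f (-x)" unfolding f_as_def using s(2)[of x] s(2)[of "-x"] by simp
      hence "\<bar>x\<bar> * \<bar>f_as f x\<bar> \<le> \<bar>x\<bar> * (f x + f (-x))" by (rule mult_left_mono) simp
      moreover have "0 \<le> \<bar>x\<bar> * (f x + f (-x))" using s(2)[of x] s(2)[of "-x"] by simp
      ultimately show "norm (\<bar>x\<bar> * \<bar>f_as f x\<bar>) \<le> norm (\<bar>x\<bar> * f x + \<bar>x\<bar> * f (-x))"
        by (simp add: distrib_left)
    qed
  qed
  define N where "N = (LINT x|lborel. \<bar>x\<bar> * \<bar>f_as f x\<bar>)"
  have N0: "0 \<le> N" unfolding N_def by (rule Bochner_Integration.integral_nonneg) simp
  define C where "C = c * IF + N / e"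
  have C0: "0 \<le> C" unfolding C_def using c IF0 N0 e by simp
  have "\<bar>Im (levy_symbol b f u)\<bar> \<le> C * (1 + \<bar>u\<bar> powr Y)" for u
  proof (cases "u = 0")
    case True thus ?thesis using C0 ImS[of u] by simp
  next
    case u: False
    let ?R = "\<lambda>x. (c*\<bar>u\<bar> powr (1+Y)) * ?F (u*x) + 1/e * (\<bar>x\<bar> * \<bar>f_as f x\<bar>)"
    have pt: "\<bar>sin (u*x) * f_as f x\<bar> \<le> ?R x" for x
    proof -
      have r1: "0 \<le> (c*\<bar>u\<bar> powr (1+Y)) * ?F (u*x)" using c by (simp add: PP_nonneg)
      have r2: "0 \<le> 1/e * (\<bar>x\<bar> * \<bar>f_as f x\<bar>)" using e by simp
      consider "x = 0" | "x \<noteq> 0" "\<bar>x\<bar> < e" | "e \<le> \<bar>x\<bar>" by linarith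
      thus ?thesis
      proof cases
        case 1 thus ?thesis using r1 r2 by simp
      next
        case 2
        have "\<bar>sin (u*x) * f_as f x\<bar> \<le> \<bar>sin (u*x)\<bar> * (c * \<bar>x\<bar> powr (- (1 + Y)))"
          by (subst abs_mult, rule mult_left_mono[OF hb0[OF 2]]) simp
        also have "\<dots> = c * \<bar>u\<bar> powr (1+Y) * (\<bar>sin (u*x)\<bar> * \<bar>u*x\<bar> powr (-(1+Y)))"
          using powr_scale[OF 2(1) u, of "-(1+Y)"] by (simp add: add.commute)
        also have "\<dots> \<le> c * \<bar>u\<bar> powr (1+Y) * ?F (u*x)"
          by (rule mult_left_mono[OF KD]) (use c in auto)
        finally show ?thesis using r2 by linarith
      next
        case 3
        have "\<bar>sin (u*x) * f_as f x\<bar> \<le> 1 * \<bar>f_as f x\<bar>"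
          by (subst abs_mult, rule mult_right_mono) simp_all
        also have "\<dots> \<le> 1/e * (\<bar>x\<bar> * \<bar>f_as f x\<bar>)"
        proof -
          have "e * \<bar>f_as f x\<bar> \<le> \<bar>x\<bar> * \<bar>f_as f x\<bar>" by (rule mult_right_mono) (use 3 in auto)
          thus ?thesis using e by (simp add: field_simps)
        qed
        finally show ?thesis using r1 by linarith
      qed
    qed
    have iL: "integrable lborel (\<lambda>x. sin (u*x) * f_as f x)"
    proof -
      have "integrable lborel (\<lambda>x. (sin (u*x) * f x - sin (u*x) * f (-x)) / 2)"
        using sini[of u] sini2[of u] by simp
      thus ?thesis by (simp add: f_as_def algebra_simps diff_divide_distrib)
    qed
    have iR1: "integrable lborel (\<lambda>x. (c*\<bar>u\<bar> powr (1+Y)) * ?F (u*x))"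
      and vR1: "(LINT x|lborel. (c*\<bar>u\<bar> powr (1+Y)) * ?F (u*x)) = (c*\<bar>u\<bar> powr (1+Y)) * (IF / \<bar>u\<bar>)"
      using int_scaled[OF Fi u] unfolding IF_def by auto
    have iR2: "integrable lborel (\<lambda>x. 1/e * (\<bar>x\<bar> * \<bar>f_as f x\<bar>))" using Ni by simp
    have vR2: "(LINT x|lborel. 1/e * (\<bar>x\<bar> * \<bar>f_as f x\<bar>)) = 1/e * N" unfolding N_def by simp
    have "\<bar>Im (levy_symbol b f u)\<bar> \<le> (LINT x|lborel. ?R x)"
      unfolding ImS by (rule integral_abs_bound_integral[OF iL Bochner_Integration.integrable_add[OF iR1 iR2] pt])
    also have "\<dots> = (c*\<bar>u\<bar> powr (1+Y)) * (IF / \<bar>u\<bar>) + 1/e * N"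
      using Bochner_Integration.integral_add[OF iR1 iR2] vR1 vR2 by simp
    also have "\<dots> = c*IF * (\<bar>u\<bar> powr (1+Y) / \<bar>u\<bar>) + 1/e * N"
      by (simp add: divide_inverse ac_simps)
    also have "\<dots> = c*IF * \<bar>u\<bar> powr Y + N/e"
      by (simp only: powr_div_u[OF u]) simp
    also have "\<dots> \<le> C * (1 + \<bar>u\<bar> powr Y)"
    proof -
      have "C * (1 + \<bar>u\<bar> powr Y) = c*IF + c*IF * \<bar>u\<bar> powr Y + N/e + N/e * \<bar>u\<bar> powr Y"
        unfolding C_def by (simp add: algebra_simps)
      moreover have "0 \<le> c*IF" "0 \<le> N/e * \<bar>u\<bar> powr Y" using c IF0 N0 e by simp_all
      ultimately show ?thesis by linarith
    qed
    finally show ?thesis .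
  qed
  thus ?thesis using C0 by blast
qed


theorem mainTheorem11:
  fixes f :: "real \<Rightarrow> real" and b Y :: real
  assumes levy: "special_levy_density f"
    and Y: "0 < Y" "Y < 2"
  shows
   "(f_s f \<in> O[at 0](\<lambda>x. \<bar>x\<bar> powr (- (1 + Y))) \<longrightarrow>
      (\<exists>C\<ge>0. \<forall>u::real. A_dens (f_s f) u = complex_of_real (Re (A_dens f u))
          \<and> 0 \<le> Re (A_dens f u) \<and> Re (A_dens f u) \<le> C * (1 + \<bar>u\<bar> powr Y)))
  \<and> ((\<exists>C>0. \<exists>g::real \<Rightarrow> real. \<exists>\<delta>>0. (\<forall>x. x \<noteq> 0 \<longrightarrow> f_s f x = C / \<bar>x\<bar> powr (1 + Y) + g x)
          \<and> g \<in> O[at 0](\<lambda>x. \<bar>x\<bar> powr (- (1 + Y - \<delta>)))) \<longrightarrow>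
      (\<exists>C1>0. \<exists>C2\<ge>0. \<exists>Y'. 0 < Y' \<and> Y' < Y \<and>
         (\<forall>u::real. A_dens (f_s f) u = complex_of_real (Re (A_dens f u))
          \<and> Re (A_dens f u) \<ge> C1 * \<bar>u\<bar> powr Y - C2 * (1 + \<bar>u\<bar> powr Y'))))
  \<and> ((f_as f \<in> O[at 0](\<lambda>x. \<bar>x\<bar> powr (- (1 + Y))) \<and> Y \<noteq> 1) \<longrightarrow>
      (\<exists>C\<ge>0. \<exists>C1\<ge>0. \<forall>u::real. \<bar>Im (A_dens f u)\<bar> = cmod (A_dens (f_as f) u)
          \<and> cmod (A_dens (f_as f) u) \<le> C * (1 + \<bar>u\<bar> + \<bar>u\<bar> powr Y)
          \<and> C * (1 + \<bar>u\<bar> + \<bar>u\<bar> powr Y) \<le> C1 * (1 + \<bar>u\<bar> powr (max 1 Y))))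
  \<and> ((Y < 1 \<and> f_as f \<in> O[at 0](\<lambda>x. \<bar>x\<bar> powr (- (1 + Y)))
        \<and> integrable lborel (\<lambda>x. \<bar>x\<bar> * f x) \<and> b = (LINT x|lborel. x * f x)) \<longrightarrow>
      (\<exists>C\<ge>0. \<forall>u::real. \<bar>Im (levy_symbol b f u)\<bar> \<le> C * (1 + \<bar>u\<bar> powr Y)))"
    apply (intro conjI)
  subgoal using partA[OF levy Y] by blast
  subgoal using partB[OF levy Y] by blast
  subgoal by (rule partC[OF levy Y])
  subgoal using partD[OF levy Y(1)] by blast
  done

end
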